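(* The exponential generating function $f(x,y)=f(x,y;p,q)=\sum_{n\ge1}a_n(y;p,q)\frac{x^n}{n!}$ satisfies $$\frac{\partial}{\partial x}f(x,y)=ypq^2+\frac{ypq}{1-yp}\bigl(f(x,1)-f(x,yp)\bigr)+\frac{ypq^2}{1-ypq}\bigl(f(x,yp)-ypq\,f(xypq,1/q)\bigr).$$
   Context: An inversion sequence of length $n$ is a sequence $\rho=\rho_1\cdots\rho_n$ of integers with $1\le \rho_i\le i$ for all $i$. Let $I_{n,i}$ be the set of inversion sequences of length $n$ with last letter $i$. Represent $\rho$ as a bargraph whose $i$-th column has $\rho_i$ unit cells. Let $\mathrm{area}(\rho)=\rho_1+\cdots+\rho_n$ and let $\mathrm{sper}(\rho)$ be half the perimeter of the bargraph (bottom boundary included), i.e. $\mathrm{sper}(\rho)=n+\rho_1+\sum_{i=1}^{n-1}\max(\rho_{i+1}-\rho_i,0)$. Define $a_{n,i}(p,q)=\sum_{\rho\in I_{n,i}}p^{\mathrm{area}(\rho)}q^{\mathrm{sper}(\rho)}$ and $a_n(y;p,q)=\sum_{i=1}^n a_{n,i}(p,q)y^i$. *)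

theory Defs
  imports Complex_Main "HOL-Computational_Algebra.Formal_Power_Series"
begin

text \<open>Inversion sequences of length n, as lists rho with rho!(i-1) = rho_i,
  so 1 \<le> rho!i \<le> i+1 for i < n.\<close>
definition inv_seqs :: "nat \<Rightarrow> nat list set" where
  "inv_seqs n = {rho. length rho = n \<and> (\<forall>i<n. 1 \<le> rho ! i \<and> rho ! i \<le> Suc i)}"

definition inv_seqs_last :: "nat \<Rightarrow> nat \<Rightarrow> nat list set" where
  "inv_seqs_last n i = {rho \<in> inv_seqs n. last rho = i}"

definition area :: "nat list \<Rightarrow> nat" where
  "area rho = sum_list rho"

text \<open>Semi-perimeter: n + rho_1 + sum_{i=1}^{n-1} max(rho_{i+1} - rho_i, 0).
  Truncated subtraction on nat is exactly max(_ - _, 0).\<close>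
definition sper :: "nat list \<Rightarrow> nat" where
  "sper rho = length rho + rho ! 0
     + (\<Sum>i < length rho - 1. rho ! Suc i - rho ! i)"

definition a_ni :: "nat \<Rightarrow> nat \<Rightarrow> real \<Rightarrow> real \<Rightarrow> real" where
  "a_ni n i p q = (\<Sum>rho \<in> inv_seqs_last n i. p ^ area rho * q ^ sper rho)"

definition a_n :: "nat \<Rightarrow> real \<Rightarrow> real \<Rightarrow> real \<Rightarrow> real" where
  "a_n n y p q = (\<Sum>i = 1..n. a_ni n i p q * y ^ i)"

definition egf :: "real \<Rightarrow> real \<Rightarrow> real \<Rightarrow> real fps" where
  "egf y p q = Abs_fps (\<lambda>n. if n = 0 then 0 else a_n n y p q / fact n)"

end

theory Submission
  imports Defs
begin

unbundle fps_syntax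

lemma geo_split:
  fixes r q :: real
  assumes "1 \<le> i" "i \<le> n" "q \<noteq> 0" "r \<noteq> 1" "r * q \<noteq> 1"
  shows "(\<Sum>j=1..Suc n. r^j * q^(1 + (j - i))) =
     r*q/(1-r)*(1-r^i) + r*q^2/(1-r*q)*(r^i - r*q*(r*q)^n*(1/q)^i)"
proof -
  let ?s = "r*q"
  have split: "{1..Suc n} = {1..i} \<union> {Suc i..Suc n}" using assms by auto
  have A: "(\<Sum>j=1..i. r^j * q^(1 + (j - i))) = q * (\<Sum>j=1..i. r^j)"
    by (simp add: sum_distrib_left mult.commute)
  have A2: "(1 - r) * (\<Sum>j=1..i. r^j) = r - r^Suc i"
    using sum_gp_multiplied[of 1 i r] assms by simp
  have B: "(\<Sum>j=Suc i..Suc n. r^j * q^(1 + (j - i))) = q / q^i * (\<Sum>j=Suc i..Suc n. ?s^j)"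
  proof -
    have "r^j * q^(1 + (j - i)) = q / q^i * ?s^j" if "j \<in> {Suc i..Suc n}" for j
    proof -
      have "q^(1 + (j - i)) * q^i = q * q^j" using that
        by (simp add: power_add[symmetric])
      then show ?thesis using assms by (simp add: field_simps power_mult_distrib)
    qed
    then show ?thesis unfolding sum_distrib_left by (intro sum.cong) auto
  qed
  have B2: "(1 - ?s) * (\<Sum>j=Suc i..Suc n. ?s^j) = ?s^Suc i - ?s^Suc (Suc n)"
    using sum_gp_multiplied[of "Suc i" "Suc n" ?s] assms by simp
  have disj: "{1..i} \<inter> {Suc i..Suc n} = {}" by auto
  have "(\<Sum>j=1..Suc n. r^j * q^(1 + (j - i))) = q * (\<Sum>j=1..i. r^j) + q / q^i * (\<Sum>j=Suc i..Suc n. ?s^j)"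
    unfolding split by (subst sum.union_disjoint) (use disj A B in auto)
  also have "\<dots> = q * ((r - r^Suc i)/(1-r)) + q / q^i * ((?s^Suc i - ?s^Suc (Suc n))/(1-?s))"
  proof -
    have r1: "1 - r \<noteq> 0" and s1: "1 - ?s \<noteq> 0" using assms by auto
    have A3: "(\<Sum>j=1..i. r^j) = (r - r^Suc i)/(1-r)"
      using A2 r1 by (simp add: eq_divide_eq mult.commute)
    have B3: "(\<Sum>j=Suc i..Suc n. ?s^j) = (?s^Suc i - ?s^Suc (Suc n))/(1-?s)"
      using B2 s1 by (simp add: eq_divide_eq mult.commute)
    show ?thesis by (simp only: A3 B3)
  qed
  also have "\<dots> = r*q/(1-r)*(1-r^i) + r*q^2/(1-r*q)*(r^i - r*q*(r*q)^n*(1/q)^i)"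
  proof -
    have E1: "q * ((r - r^Suc i)/(1-r)) = r*q/(1-r)*(1-r^i)"
      by (simp add: algebra_simps)
    have N: "q / q^i * (?s^Suc i - ?s^Suc (Suc n)) = r*q^2*(r^i - r*q*(r*q)^n*(1/q)^i)"
    proof -
      have "q / q^i * ?s^Suc i = r*q^2*r^i" using assms
        by (simp add: power_mult_distrib power2_eq_square)
      moreover have "q / q^i * ?s^Suc (Suc n) = r*q^2*(r*q*(r*q)^n*(1/q)^i)"
        by (simp add: power_one_over power2_eq_square)
      ultimately show ?thesis by (simp add: right_diff_distrib)
    qed
    have E2: "q / q^i * ((?s^Suc i - ?s^Suc (Suc n))/(1-?s)) = r*q^2/(1-r*q)*(r^i - r*q*(r*q)^n*(1/q)^i)"
    proof -
      have "q / q^i * ((?s^Suc i - ?s^Suc (Suc n))/(1-?s)) = (q / q^i * (?s^Suc i - ?s^Suc (Suc n)))/(1-?s)"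
        by simp
      also have "\<dots> = (r*q^2*(r^i - r*q*(r*q)^n*(1/q)^i))/(1-?s)" by (simp only: N)
      finally show ?thesis by simp
    qed
    show ?thesis using E1 E2 by simp
  qed
  finally show ?thesis .
qed



lemma compose_scale_nth:
  fixes f :: "real fps"
  shows "(fps_compose f (fps_const c * fps_X)) $ n = c^n * f $ n"
proof -
  have "\<And>i. (fps_const c * fps_X)^i = fps_const (c^i) * fps_X^i"
    by (simp add: power_mult_distrib fps_const_power)
  then have "(fps_compose f (fps_const c * fps_X)) $ n = (\<Sum>i=0..n. f$i * (c^i * (if n = i then 1 else 0)))"
    by (simp add: fps_compose_nth)
  also have "\<dots> = c^n * f $ n" by (simp add: if_distrib cong: if_cong)
  finally show ?thesis .
qed

definition W :: "nat \<Rightarrow> real \<Rightarrow> real \<Rightarrow> real \<Rightarrow> real" where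
  "W n y p q = (\<Sum>rho \<in> inv_seqs n. p ^ area rho * q ^ sper rho * y ^ last rho)"

lemma finite_inv_seqs: "finite (inv_seqs n)"
proof -
  have "inv_seqs n \<subseteq> {xs. set xs \<subseteq> {0..n} \<and> length xs = n}"
    by (auto simp: inv_seqs_def in_set_conv_nth) (meson Suc_leI order_trans)
  moreover have "finite {xs. set xs \<subseteq> {0..n} \<and> length xs = n}"
    by (rule finite_lists_length_eq) simp
  ultimately show ?thesis by (rule finite_subset)
qed

lemma last_range: "rho \<in> inv_seqs n \<Longrightarrow> 1 \<le> n \<Longrightarrow> last rho \<in> {1..n}"
proof -
  assume a: "rho \<in> inv_seqs n" "1 \<le> n"
  then have "rho \<noteq> []" "length rho = n" by (auto simp: inv_seqs_def)
  then have "last rho = rho ! (n - 1)" by (simp add: last_conv_nth)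
  moreover have "1 \<le> rho ! (n - 1) \<and> rho ! (n - 1) \<le> Suc (n - 1)"
  proof -
    have all: "\<forall>i<n. 1 \<le> rho!i \<and> rho!i \<le> Suc i" using a by (simp add: inv_seqs_def)
    have "n - 1 < n" using a by simp
    then show ?thesis using all by blast
  qed
  ultimately show ?thesis using a by auto
qed

lemma a_n_W: "1 \<le> n \<Longrightarrow> a_n n y p q = W n y p q"
proof -
  assume n: "1 \<le> n"
  have "a_n n y p q = (\<Sum>i\<in>{1..n}. \<Sum>rho\<in>{rho \<in> inv_seqs n. last rho = i}. p ^ area rho * q ^ sper rho * y ^ last rho)"
    unfolding a_n_def a_ni_def inv_seqs_last_def sum_distrib_right
    by (intro sum.cong refl) auto
  also have "\<dots> = W n y p q" unfolding W_def
    by (rule sum.group) (use finite_inv_seqs last_range n in auto)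
  finally show ?thesis .
qed

lemma inv_seqs_Suc:
  "inv_seqs (Suc n) = (\<lambda>(rho, j). rho @ [j]) ` (inv_seqs n \<times> {1..Suc n})"
proof (rule set_eqI)
  fix xs
  show "xs \<in> inv_seqs (Suc n) \<longleftrightarrow> xs \<in> (\<lambda>(rho, j). rho @ [j]) ` (inv_seqs n \<times> {1..Suc n})"
  proof
    assume xs: "xs \<in> inv_seqs (Suc n)"
    then have "xs \<noteq> []" by (auto simp: inv_seqs_def)
    then have e: "xs = butlast xs @ [last xs]" by simp
    have "butlast xs \<in> inv_seqs n" using xs by (auto simp: inv_seqs_def nth_butlast)
    moreover have "last xs \<in> {1..Suc n}" using last_range[OF xs] by simp
    ultimately show "xs \<in> (\<lambda>(rho, j). rho @ [j]) ` (inv_seqs n \<times> {1..Suc n})"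
      using e by (intro image_eqI[of _ _ "(butlast xs, last xs)"]) auto
  next
    assume "xs \<in> (\<lambda>(rho, j). rho @ [j]) ` (inv_seqs n \<times> {1..Suc n})"
    then obtain rho j where r: "rho \<in> inv_seqs n" "j \<in> {1..Suc n}" "xs = rho @ [j]" by auto
    show "xs \<in> inv_seqs (Suc n)" using r
      by (auto simp: inv_seqs_def nth_append less_Suc_eq)
  qed
qed

lemma inj_snoc: "inj_on (\<lambda>(rho, j). rho @ [j]) A"
  by (auto simp: inj_on_def)

lemma area_snoc: "area (rho @ [j]) = area rho + j"
  by (simp add: area_def)

lemma sper_snoc: "rho \<noteq> [] \<Longrightarrow> sper (rho @ [j]) = sper rho + 1 + (j - last rho)"
proof -
  assume "rho \<noteq> []"
  then obtain k where k: "length rho = Suc k" by (cases rho) auto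
  have s: "(\<Sum>i<Suc k. (rho @ [j]) ! Suc i - (rho @ [j]) ! i)
        = (\<Sum>i<k. rho ! Suc i - rho ! i) + (j - last rho)"
  proof -
    have l: "last rho = rho ! k" using k \<open>rho \<noteq> []\<close> by (simp add: last_conv_nth)
    show ?thesis using k by (simp add: nth_append l)
  qed
  have len1: "length (rho @ [j]) - 1 = Suc k" "length rho - 1 = k" using k by auto
  have z: "(rho @ [j]) ! 0 = rho ! 0" using k by (simp add: nth_append)
  show ?thesis unfolding sper_def len1 s z using k by simp
qed

lemma W_Suc:
  assumes "1 \<le> n"
  shows "W (Suc n) y p q = (\<Sum>rho\<in>inv_seqs n. p ^ area rho * q ^ sper rho *
      (\<Sum>j=1..Suc n. (y*p)^j * q^(1 + (j - last rho))))"
proof -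
  have "W (Suc n) y p q = (\<Sum>x\<in>inv_seqs n \<times> {1..Suc n}. (\<lambda>xs. p ^ area xs * q ^ sper xs * y ^ last xs) ((\<lambda>(rho, j). rho @ [j]) x))"
    unfolding W_def inv_seqs_Suc by (subst sum.reindex[OF inj_snoc]) (simp add: o_def)
  also have "\<dots> = (\<Sum>rho\<in>inv_seqs n. \<Sum>j\<in>{1..Suc n}. p ^ area (rho @ [j]) * q ^ sper (rho @ [j]) * y ^ j)"
    by (simp only: sum.cartesian_product) (intro sum.cong refl, auto split: prod.splits)
  also have "\<dots> = (\<Sum>rho\<in>inv_seqs n. p ^ area rho * q ^ sper rho *
      (\<Sum>j=1..Suc n. (y*p)^j * q^(1 + (j - last rho))))"
  proof (rule sum.cong[OF refl])
    fix rho assume r: "rho \<in> inv_seqs n"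
    then have ne: "rho \<noteq> []" using assms by (auto simp: inv_seqs_def)
    show "(\<Sum>j\<in>{1..Suc n}. p ^ area (rho @ [j]) * q ^ sper (rho @ [j]) * y ^ j) =
      p ^ area rho * q ^ sper rho * (\<Sum>j=1..Suc n. (y*p)^j * q^(1 + (j - last rho)))"
      unfolding sum_distrib_left
      by (intro sum.cong refl) (simp add: area_snoc sper_snoc[OF ne] power_add power_mult_distrib)
  qed
  finally show ?thesis .
qed

lemma W_rec:
  fixes y p q :: real
  assumes "q \<noteq> 0" and "y * p \<noteq> 1" and "y * p * q \<noteq> 1" and n: "1 \<le> n"
  shows "W (Suc n) y p q =
     y*p*q/(1-y*p) * (W n 1 p q - W n (y*p) p q)
     + y*p*q^2/(1-y*p*q) * (W n (y*p) p q - y*p*q*(y*p*q)^n * W n (1/q) p q)"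
proof -
  let ?r = "y*p"
  let ?c1 = "?r*q/(1-?r)" and ?c2 = "?r*q^2/(1-?r*q)"
  have "W (Suc n) y p q = (\<Sum>rho\<in>inv_seqs n. p ^ area rho * q ^ sper rho *
      (?c1*(1-?r^last rho) + ?c2*(?r^last rho - ?r*q*(?r*q)^n*(1/q)^last rho)))"
    unfolding W_Suc[OF n]
  proof (intro sum.cong refl)
    fix rho assume "rho \<in> inv_seqs n"
    then have "last rho \<in> {1..n}" using last_range n by blast
    then show "p ^ area rho * q ^ sper rho * (\<Sum>j=1..Suc n. ?r^j * q^(1 + (j - last rho))) =
       p ^ area rho * q ^ sper rho * (?c1*(1-?r^last rho) + ?c2*(?r^last rho - ?r*q*(?r*q)^n*(1/q)^last rho))"
      using geo_split[of "last rho" n q ?r] assms by simp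
  qed
  also have "\<dots> = (\<Sum>rho\<in>inv_seqs n. ?c1 * (p ^ area rho * q ^ sper rho * 1 ^ last rho - p ^ area rho * q ^ sper rho * ?r ^ last rho)
      + ?c2 * (p ^ area rho * q ^ sper rho * ?r ^ last rho - ?r*q*(?r*q)^n * (p ^ area rho * q ^ sper rho * (1/q) ^ last rho)))"
  proof -
    have lin: "\<And>w a b c1 c2 K::real. w*(c1*(1-a)+c2*(a-K*b)) = c1*(w*1 - w*a) + c2*(w*a - K*(w*b))"
      by (simp add: algebra_simps)
    show ?thesis by (intro sum.cong refl, unfold power_one, rule lin)
  qed
  also have "\<dots> = ?c1 * (W n 1 p q - W n ?r p q) + ?c2 * (W n ?r p q - ?r*q*(?r*q)^n * W n (1/q) p q)"
    unfolding W_def by (simp only: sum.distrib sum_subtractf sum_distrib_left[symmetric])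
  finally show ?thesis .
qed

theorem theorem2p2:
  fixes y p q :: real
  assumes "q \<noteq> 0" and "y * p \<noteq> 1" and "y * p * q \<noteq> 1"
  shows "fps_deriv (egf y p q) =
      fps_const (y * p * q ^ 2)
    + fps_const (y * p * q / (1 - y * p)) * (egf 1 p q - egf (y * p) p q)
    + fps_const (y * p * q ^ 2 / (1 - y * p * q)) *
        (egf (y * p) p q
         - fps_const (y * p * q) * fps_compose (egf (1 / q) p q) (fps_const (y * p * q) * fps_X))"
  proof (rule fps_ext)
  fix n
  let ?c1 = "y * p * q / (1 - y * p)" and ?c2 = "y * p * q ^ 2 / (1 - y * p * q)"
  have egf_nth: "egf z p q $ k = (if k = 0 then 0 else W k z p q / fact k)" for z k
    unfolding egf_def using a_n_W[of k z p q] by simp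
  show "fps_deriv (egf y p q) $ n = (fps_const (y * p * q ^ 2)
    + fps_const ?c1 * (egf 1 p q - egf (y * p) p q)
    + fps_const ?c2 *
        (egf (y * p) p q
         - fps_const (y * p * q) * fps_compose (egf (1 / q) p q) (fps_const (y * p * q) * fps_X))) $ n"
  proof (cases n)
    case 0
    have i0: "inv_seqs 0 = {[]}" by (auto simp: inv_seqs_def)
    have i1: "inv_seqs (Suc 0) = {[1]}" using inv_seqs_Suc[of 0] by (simp add: i0)
    have "W (Suc 0) y p q = y * p * q^2"
      by (simp add: W_def i1 area_def sper_def power2_eq_square)
    then show ?thesis using 0 by (simp add: egf_nth compose_scale_nth)
  next
    case (Suc m)
    have L: "fps_deriv (egf y p q) $ n = W (Suc (Suc m)) y p q / fact (Suc m)"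
    proof -
      have f: "(fact (Suc (Suc m)) :: real) = of_nat (Suc (Suc m)) * fact (Suc m)" by (rule fact_Suc)
      have "fps_deriv (egf y p q) $ n = of_nat (Suc (Suc m)) * (W (Suc (Suc m)) y p q / fact (Suc (Suc m)))"
        using Suc by (simp add: egf_nth del: of_nat_Suc fact_Suc)
      also have "\<dots> = W (Suc (Suc m)) y p q / fact (Suc m)"
        unfolding f by (simp del: of_nat_Suc fact_Suc)
      finally show ?thesis .
    qed
    have R: "(fps_const (y * p * q ^ 2)
    + fps_const ?c1 * (egf 1 p q - egf (y * p) p q)
    + fps_const ?c2 *
        (egf (y * p) p q
         - fps_const (y * p * q) * fps_compose (egf (1 / q) p q) (fps_const (y * p * q) * fps_X))) $ n
      = (?c1 * (W (Suc m) 1 p q - W (Suc m) (y*p) p q)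
         + ?c2 * (W (Suc m) (y*p) p q - y*p*q*(y*p*q)^(Suc m) * W (Suc m) (1/q) p q)) / fact (Suc m)"
    proof -
      have cmp: "(fps_compose (egf (1/q) p q) (fps_const (y*p*q) * fps_X)) $ Suc m = (y*p*q)^Suc m * (W (Suc m) (1/q) p q / fact (Suc m))"
        by (simp add: compose_scale_nth egf_nth del: fact_Suc)
      have F: "(fact (Suc m) :: real) \<noteq> 0" by simp
      have lin2: "\<And>c1 c2 A B C K K' F::real. F \<noteq> 0 \<Longrightarrow> 0 + c1*(A/F - B/F) + c2*(B/F - K*(K'*(C/F))) = (c1*(A-B) + c2*(B - K*K'*C))/F"
        by (simp add: field_simps)
      have e: "\<And>z. egf z p q $ Suc m = W (Suc m) z p q / fact (Suc m)"
        by (simp add: egf_nth del: fact_Suc)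
      show ?thesis unfolding Suc fps_add_nth fps_sub_nth fps_mult_left_const_nth cmp e fps_nth_fps_const
        by (simp only: nat.distinct if_False) (rule lin2[OF F])
    qed
    have Wr: "W (Suc (Suc m)) y p q = ?c1 * (W (Suc m) 1 p q - W (Suc m) (y*p) p q)
         + ?c2 * (W (Suc m) (y*p) p q - y*p*q*(y*p*q)^(Suc m) * W (Suc m) (1/q) p q)"
      by (rule W_rec[OF assms]) simp
    show ?thesis unfolding L R Wr ..
  qed
qed

end
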